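(* Let $\mathfrak h\subseteq\Phi^+$ be a Hessenberg set and let $v,w\in W$ with $v$ a cover of $w$. Then $|N_v|-|\Phi^+\setminus\mathfrak h|\le|N^{\mathfrak h}_v|\le|N^{\mathfrak h}_w|+1$.
   Context: $\Phi$ is a crystallographic root system in a real Euclidean space with base $\Delta$, positive roots $\Phi^+$, $\Phi^-=-\Phi^+$, Weyl group $W$ with length $\ell$, and $s_\alpha$ the reflection through $\alpha$. Write $\alpha\prec\beta$ if $\beta-\alpha$ is a sum of positive roots. A Hessenberg set is a subset $\mathfrak h\subseteq\Phi^+$ whose complement in $\Phi^+$ is upward closed for $\prec$. For $w\in W$, $N_w=\{\beta\in\Phi^+: w^{-1}\beta\in\Phi^-\}$ and $N^{\mathfrak h}_w=\{\beta\in\Phi^+: w^{-1}\beta\in-\mathfrak h\}$. We say $v$ is a cover of $w$ if $v=s_\alpha w$ for some $\alpha\in\Phi^+$ with $v^{-1}\alpha\in\Phi^-$ and $\ell(v)=\ell(w)+1$. *)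

theory Defs
  imports "HOL-Analysis.Analysis"
begin

definition rs_refl :: "'a::euclidean_space \<Rightarrow> 'a \<Rightarrow> 'a" where
  "rs_refl \<alpha> x = x - (2 * (x \<bullet> \<alpha>) / (\<alpha> \<bullet> \<alpha>)) *\<^sub>R \<alpha>"

definition crystallographic_root_system :: "'a::euclidean_space set \<Rightarrow> bool" where
  "crystallographic_root_system \<Phi> \<longleftrightarrow>
     finite \<Phi> \<and> 0 \<notin> \<Phi> \<and> span \<Phi> = UNIV \<and>
     (\<forall>\<alpha>\<in>\<Phi>. \<forall>c::real. c *\<^sub>R \<alpha> \<in> \<Phi> \<longrightarrow> c = 1 \<or> c = -1) \<and>
     (\<forall>\<alpha>\<in>\<Phi>. rs_refl \<alpha> ` \<Phi> = \<Phi>) \<and>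
     (\<forall>\<alpha>\<in>\<Phi>. \<forall>\<beta>\<in>\<Phi>. 2 * (\<beta> \<bullet> \<alpha>) / (\<alpha> \<bullet> \<alpha>) \<in> \<int>)"

definition is_base :: "'a::euclidean_space set \<Rightarrow> 'a set \<Rightarrow> bool" where
  "is_base \<Phi> \<Delta> \<longleftrightarrow> \<Delta> \<subseteq> \<Phi> \<and> independent \<Delta> \<and>
     (\<forall>\<beta>\<in>\<Phi>. \<exists>c::'a \<Rightarrow> int. \<beta> = (\<Sum>\<delta>\<in>\<Delta>. of_int (c \<delta>) *\<^sub>R \<delta>) \<and>
        ((\<forall>\<delta>\<in>\<Delta>. c \<delta> \<ge> 0) \<or> (\<forall>\<delta>\<in>\<Delta>. c \<delta> \<le> 0)))"

definition pos_roots :: "'a::euclidean_space set \<Rightarrow> 'a set \<Rightarrow> 'a set" where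
  "pos_roots \<Phi> \<Delta> = {\<beta>\<in>\<Phi>. \<exists>c::'a \<Rightarrow> int. \<beta> = (\<Sum>\<delta>\<in>\<Delta>. of_int (c \<delta>) *\<^sub>R \<delta>) \<and>
        (\<forall>\<delta>\<in>\<Delta>. c \<delta> \<ge> 0)}"

definition neg_roots :: "'a::euclidean_space set \<Rightarrow> 'a set \<Rightarrow> 'a set" where
  "neg_roots \<Phi> \<Delta> = uminus ` pos_roots \<Phi> \<Delta>"

inductive_set weyl_group :: "'a::euclidean_space set \<Rightarrow> ('a \<Rightarrow> 'a) set" for \<Phi> where
  weyl_id: "id \<in> weyl_group \<Phi>"
| weyl_step: "\<alpha> \<in> \<Phi> \<Longrightarrow> w \<in> weyl_group \<Phi> \<Longrightarrow> rs_refl \<alpha> \<circ> w \<in> weyl_group \<Phi>"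

definition weyl_length :: "'a::euclidean_space set \<Rightarrow> ('a \<Rightarrow> 'a) \<Rightarrow> nat" where
  "weyl_length \<Delta> w = (LEAST k. \<exists>xs. length xs = k \<and> set xs \<subseteq> \<Delta> \<and>
       w = foldr (\<lambda>\<alpha> f. rs_refl \<alpha> \<circ> f) xs id)"

definition root_prec :: "'a::euclidean_space set \<Rightarrow> 'a set \<Rightarrow> 'a \<Rightarrow> 'a \<Rightarrow> bool" where
  "root_prec \<Phi> \<Delta> \<alpha> \<beta> \<longleftrightarrow>
     (\<exists>xs. xs \<noteq> [] \<and> set xs \<subseteq> pos_roots \<Phi> \<Delta> \<and> \<beta> - \<alpha> = sum_list xs)"

definition hessenberg_set :: "'a::euclidean_space set \<Rightarrow> 'a set \<Rightarrow> 'a set \<Rightarrow> bool" where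
  "hessenberg_set \<Phi> \<Delta> \<hh> \<longleftrightarrow> \<hh> \<subseteq> pos_roots \<Phi> \<Delta> \<and>
     (\<forall>\<alpha>\<in>pos_roots \<Phi> \<Delta> - \<hh>. \<forall>\<beta>\<in>pos_roots \<Phi> \<Delta>.
         root_prec \<Phi> \<Delta> \<alpha> \<beta> \<longrightarrow> \<beta> \<in> pos_roots \<Phi> \<Delta> - \<hh>)"

definition inv_set :: "'a::euclidean_space set \<Rightarrow> 'a set \<Rightarrow> ('a \<Rightarrow> 'a) \<Rightarrow> 'a set" where
  "inv_set \<Phi> \<Delta> w = {\<beta>\<in>pos_roots \<Phi> \<Delta>. inv w \<beta> \<in> neg_roots \<Phi> \<Delta>}"

definition hess_inv_set :: "'a::euclidean_space set \<Rightarrow> 'a set \<Rightarrow> 'a set \<Rightarrow> ('a \<Rightarrow> 'a) \<Rightarrow> 'a set" where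
  "hess_inv_set \<Phi> \<Delta> \<hh> w = {\<beta>\<in>pos_roots \<Phi> \<Delta>. inv w \<beta> \<in> uminus ` \<hh>}"

definition is_cover :: "'a::euclidean_space set \<Rightarrow> 'a set \<Rightarrow> ('a \<Rightarrow> 'a) \<Rightarrow> ('a \<Rightarrow> 'a) \<Rightarrow> bool" where
  "is_cover \<Phi> \<Delta> v w \<longleftrightarrow>
     (\<exists>\<alpha>\<in>pos_roots \<Phi> \<Delta>. v = rs_refl \<alpha> \<circ> w \<and> inv v \<alpha> \<in> neg_roots \<Phi> \<Delta> \<and>
        weyl_length \<Delta> v = weyl_length \<Delta> w + 1)"

end

theory Submission
  imports Defs
begin



lemma rs_linear: "linear (rs_refl a)"
  unfolding rs_refl_def by (auto intro!: linearI simp: algebra_simps inner_add_left add_divide_distrib scaleR_add_left)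

lemma rs_add: "rs_refl a (x + y) = rs_refl a x + rs_refl a y"
  using rs_linear linear_add by blast
lemma rs_neg: "rs_refl a (- x) = - rs_refl a x"
  using rs_linear linear_neg by blast
lemma rs_scale: "rs_refl a (c *\<^sub>R x) = c *\<^sub>R rs_refl a x"
  using rs_linear linear_scale by blast

lemma rs_self: "a \<noteq> 0 \<Longrightarrow> rs_refl a a = - a"
  unfolding rs_refl_def by (simp add: scaleR_2)

lemma rs_invol: "a \<noteq> 0 \<Longrightarrow> rs_refl a (rs_refl a x) = x"
  unfolding rs_refl_def by (simp add: inner_diff_left algebra_simps divide_simps)

lemma rs_inner: "rs_refl a x \<bullet> rs_refl a y = x \<bullet> y"
  unfolding rs_refl_def
  apply (cases "a = 0", simp)
  apply (simp add: inner_diff_left inner_diff_right algebra_simps divide_simps inner_commute)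
  done

definition orth :: "('a::euclidean_space \<Rightarrow> 'a) \<Rightarrow> bool" where
  "orth u \<longleftrightarrow> linear u \<and> (\<forall>x y. u x \<bullet> u y = x \<bullet> y)"

lemma orth_rs: "orth (rs_refl a)"
  by (simp add: orth_def rs_linear rs_inner)

lemma orth_comp: "orth u \<Longrightarrow> orth v \<Longrightarrow> orth (u \<circ> v)"
  by (auto simp: orth_def linear_compose)

lemma rs_conj: assumes "orth u" shows "rs_refl (u g) (u x) = u (rs_refl g x)"
proof -
  have l: "linear u" and i: "\<And>x y. u x \<bullet> u y = x \<bullet> y" using assms by (auto simp: orth_def)
  show ?thesis unfolding rs_refl_def using i[of x g] i[of g g]
    by (simp add: linear_diff[OF l] linear_scale[OF l])
qed




locale rs =
  fixes \<Phi> \<Delta> :: "'a::euclidean_space set"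
  assumes crs: "crystallographic_root_system \<Phi>" and base: "is_base \<Phi> \<Delta>"
begin

abbreviation P where "P \<equiv> pos_roots \<Phi> \<Delta>"
abbreviation N where "N \<equiv> neg_roots \<Phi> \<Delta>"

lemma finPhi: "finite \<Phi>" and nz: "0 \<notin> \<Phi>"
  and rclosed: "\<alpha> \<in> \<Phi> \<Longrightarrow> x \<in> \<Phi> \<Longrightarrow> rs_refl \<alpha> x \<in> \<Phi>"
  and integ: "\<alpha> \<in> \<Phi> \<Longrightarrow> \<beta> \<in> \<Phi> \<Longrightarrow> 2 * (\<beta> \<bullet> \<alpha>) / (\<alpha> \<bullet> \<alpha>) \<in> \<int>"
  and reduced: "\<alpha> \<in> \<Phi> \<Longrightarrow> c *\<^sub>R \<alpha> \<in> \<Phi> \<Longrightarrow> c = 1 \<or> c = -1"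
  using crs unfolding crystallographic_root_system_def by blast+

lemma Dsub: "\<Delta> \<subseteq> \<Phi>" and indep: "independent \<Delta>"
  and baserep: "\<beta> \<in> \<Phi> \<Longrightarrow> \<exists>c::'a \<Rightarrow> int. \<beta> = (\<Sum>\<delta>\<in>\<Delta>. of_int (c \<delta>) *\<^sub>R \<delta>) \<and>
        ((\<forall>\<delta>\<in>\<Delta>. c \<delta> \<ge> 0) \<or> (\<forall>\<delta>\<in>\<Delta>. c \<delta> \<le> 0))"
  using base unfolding is_base_def by blast+

lemma finD: "finite \<Delta>" using Dsub finPhi finite_subset by blast

lemma nzPhi: "\<alpha> \<in> \<Phi> \<Longrightarrow> \<alpha> \<noteq> 0" using nz by auto

lemma negclosed: "x \<in> \<Phi> \<Longrightarrow> - x \<in> \<Phi>"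
  using rclosed[of x x] rs_self[of x] nzPhi by auto

lemma P_sub: "P \<subseteq> \<Phi>" unfolding pos_roots_def by auto

lemma memP: "z \<in> \<Phi> \<Longrightarrow> z = (\<Sum>\<delta>\<in>\<Delta>. of_int (c \<delta>) *\<^sub>R \<delta>) \<Longrightarrow> \<forall>\<delta>\<in>\<Delta>. c \<delta> \<ge> 0 \<Longrightarrow> z \<in> P"
  unfolding pos_roots_def by (intro CollectI conjI exI[of _ c]) auto

lemma neg_iff: "x \<in> N \<longleftrightarrow> - x \<in> P"
  unfolding neg_roots_def by (auto simp: image_iff) (metis minus_minus)

lemma uniq:
  assumes "(\<Sum>\<delta>\<in>\<Delta>. of_int (c \<delta>) *\<^sub>R \<delta>) = (\<Sum>\<delta>\<in>\<Delta>. of_int (d \<delta>) *\<^sub>R (\<delta>::'a))" "\<delta> \<in> \<Delta>"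
  shows "c \<delta> = d \<delta>"
proof -
  have "(\<Sum>\<delta>\<in>\<Delta>. (of_int (c \<delta>) - of_int (d \<delta>)) *\<^sub>R \<delta>) = 0"
    using assms(1) by (simp add: scaleR_diff_left sum_subtractf)
  moreover have "\<forall>c. (\<Sum>v\<in>\<Delta>. c v *\<^sub>R v) = 0 \<longrightarrow> (\<forall>v \<in> \<Delta>. c v = 0)"
    using indep unfolding independent_explicit by blast
  ultimately have "\<forall>v\<in>\<Delta>. (of_int (c v) - of_int (d v) :: real) = 0"
    by (rule spec[where x="\<lambda>v. of_int (c v) - of_int (d v)", THEN mp, rotated])
  then show ?thesis using assms(2) by auto
qed

lemma disj: assumes "x \<in> P" "- x \<in> P" shows False
proof -
  obtain c where c: "x = (\<Sum>\<delta>\<in>\<Delta>. of_int (c \<delta>) *\<^sub>R \<delta>)" "\<forall>\<delta>\<in>\<Delta>. c \<delta> \<ge> 0"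
    using assms(1) unfolding pos_roots_def by blast
  obtain d where d: "- x = (\<Sum>\<delta>\<in>\<Delta>. of_int (d \<delta>) *\<^sub>R \<delta>)" "\<forall>\<delta>\<in>\<Delta>. d \<delta> \<ge> 0"
    using assms(2) unfolding pos_roots_def by blast
  have "x = (\<Sum>\<delta>\<in>\<Delta>. of_int (- d \<delta>) *\<^sub>R \<delta>)"
  proof -
    have "x = - (\<Sum>\<delta>\<in>\<Delta>. of_int (d \<delta>) *\<^sub>R \<delta>)" using d(1) by (metis minus_minus)
    also have "\<dots> = (\<Sum>\<delta>\<in>\<Delta>. of_int (- d \<delta>) *\<^sub>R \<delta>)" by (simp add: sum_negf)
    finally show ?thesis .
  qed
  then have "(\<Sum>\<delta>\<in>\<Delta>. of_int (c \<delta>) *\<^sub>R \<delta>) = (\<Sum>\<delta>\<in>\<Delta>. of_int (- d \<delta>) *\<^sub>R \<delta>)" unfolding c(1)[symmetric] .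
  then have "\<forall>\<delta>\<in>\<Delta>. c \<delta> = - d \<delta>" using uniq[of c "\<lambda>\<delta>. - d \<delta>"] by auto
  then have z: "\<forall>\<delta>\<in>\<Delta>. c \<delta> = 0"
  proof (intro ballI)
    fix \<delta> assume "\<delta> \<in> \<Delta>" "\<forall>\<delta>\<in>\<Delta>. c \<delta> = - d \<delta>"
    then have "c \<delta> = - d \<delta>" "c \<delta> \<ge> 0" "d \<delta> \<ge> 0" using c(2) d(2) by blast+
    then show "c \<delta> = 0" by linarith
  qed
  have "x = (\<Sum>\<delta>\<in>\<Delta>. of_int (c \<delta>) *\<^sub>R \<delta>)" by (rule c(1))
  also have "\<dots> = 0" using z by simp
  finally have "x = 0" .
  then show False using assms(1) P_sub nz by auto
qed

lemma disjN: "x \<in> P \<Longrightarrow> x \<in> N \<Longrightarrow> False"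
  using disj neg_iff by blast

lemma PorN: assumes "x \<in> \<Phi>" shows "x \<in> P \<or> x \<in> N"
proof -
  obtain c where c: "x = (\<Sum>\<delta>\<in>\<Delta>. of_int (c \<delta>) *\<^sub>R \<delta>)"
     "(\<forall>\<delta>\<in>\<Delta>. c \<delta> \<ge> 0) \<or> (\<forall>\<delta>\<in>\<Delta>. c \<delta> \<le> 0)" using baserep[OF assms] by blast
  show ?thesis
  proof (cases "\<forall>\<delta>\<in>\<Delta>. c \<delta> \<ge> 0")
    case True then show ?thesis using c assms unfolding pos_roots_def by blast
  next
    case False
    have e: "- x = (\<Sum>\<delta>\<in>\<Delta>. of_int (- c \<delta>) *\<^sub>R \<delta>)"
      using c(1) by (simp add: sum_negf)
    have "\<forall>\<delta>\<in>\<Delta>. - c \<delta> \<ge> 0" using c(2) False by auto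
    then have "- x \<in> P" by (rule memP[OF negclosed[OF assms] e])
    then show ?thesis using neg_iff by blast
  qed
qed

lemma D_pos: assumes "\<delta> \<in> \<Delta>" shows "\<delta> \<in> P"
proof -
  let ?c = "\<lambda>d. if d = \<delta> then 1 else (0::int)"
  have "(\<Sum>d\<in>\<Delta>. of_int (?c d) *\<^sub>R d) = \<delta>"
  proof -
    have "\<And>d. of_int (?c d) *\<^sub>R d = (if d = \<delta> then d else 0)" by simp
    then have "(\<Sum>d\<in>\<Delta>. of_int (?c d) *\<^sub>R d) = (\<Sum>d\<in>\<Delta>. (if d = \<delta> then d else 0))"
      by (rule sum.cong[OF refl])
    also have "\<dots> = \<delta>" unfolding sum.delta[OF finD] if_P[OF assms] ..
    finally show ?thesis .
  qed
  then have e: "\<delta> = (\<Sum>d\<in>\<Delta>. of_int (?c d) *\<^sub>R d)" by (rule sym)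
  have "\<delta> \<in> \<Phi>" using assms Dsub by blast
  moreover have "\<forall>d\<in>\<Delta>. ?c d \<ge> 0" by simp
  ultimately show ?thesis using memP[OF _ e] by blast
qed

lemma sum_rep:
  assumes "x \<in> P" "y \<in> P" "(m::int) \<ge> 0" "z \<in> \<Phi>" "z = x + of_int m *\<^sub>R y"
  shows "z \<in> P"
proof -
  obtain c where c: "x = (\<Sum>\<delta>\<in>\<Delta>. of_int (c \<delta>) *\<^sub>R \<delta>)" "\<forall>\<delta>\<in>\<Delta>. c \<delta> \<ge> 0"
    using assms(1) unfolding pos_roots_def by blast
  obtain d where d: "y = (\<Sum>\<delta>\<in>\<Delta>. of_int (d \<delta>) *\<^sub>R \<delta>)" "\<forall>\<delta>\<in>\<Delta>. d \<delta> \<ge> 0"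
    using assms(2) unfolding pos_roots_def by blast
  have zz: "z = (\<Sum>\<delta>\<in>\<Delta>. of_int (c \<delta> + m * d \<delta>) *\<^sub>R \<delta>)"
  proof -
    have "(\<Sum>\<delta>\<in>\<Delta>. of_int (c \<delta> + m * d \<delta>) *\<^sub>R \<delta>) =
      (\<Sum>\<delta>\<in>\<Delta>. of_int (c \<delta>) *\<^sub>R \<delta> + of_int m *\<^sub>R (of_int (d \<delta>) *\<^sub>R \<delta>))"
      by (rule sum.cong[OF refl]) (simp add: scaleR_add_left)
    also have "\<dots> = x + of_int m *\<^sub>R y"
      unfolding sum.distrib c(1) d(1) scaleR_sum_right ..
    finally show ?thesis using assms(5) by metis
  qed
  have "\<forall>\<delta>\<in>\<Delta>. c \<delta> + m * d \<delta> \<ge> 0" using c(2) d(2) assms(3) by auto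
  then show ?thesis by (rule memP[OF assms(4) zz])
qed

end



definition sprod :: "'a::euclidean_space list \<Rightarrow> 'a \<Rightarrow> 'a" where
  "sprod xs = foldr (\<lambda>\<alpha> f. rs_refl \<alpha> \<circ> f) xs id"

lemma sprod_Nil: "sprod [] = id" by (simp add: sprod_def)
lemma sprod_Cons: "sprod (a # xs) = rs_refl a \<circ> sprod xs" by (simp add: sprod_def)
lemma sprod_append: "sprod (xs @ ys) = sprod xs \<circ> sprod ys"
  by (induction xs) (simp_all add: sprod_Nil sprod_Cons o_assoc)
lemma sprod_snoc: "sprod (xs @ [a]) = sprod xs \<circ> rs_refl a"
  by (simp add: sprod_append sprod_Cons sprod_Nil)

lemma rs_bij: "a \<noteq> 0 \<Longrightarrow> bij (rs_refl a)"
  by (rule o_bij[of "rs_refl a"]) (auto simp: fun_eq_iff rs_invol)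
lemma rs_inv: "a \<noteq> 0 \<Longrightarrow> inv (rs_refl a) = rs_refl a"
  by (rule inv_unique_comp) (auto simp: fun_eq_iff rs_invol)

lemma orth_id: "orth id" by (simp add: orth_def linear_id)
lemma orth_linear: "orth u \<Longrightarrow> linear u" by (simp add: orth_def)

context rs begin

lemma single: assumes "\<delta> \<in> \<Delta>"
  shows "(\<Sum>d\<in>\<Delta>. of_int (if d = \<delta> then m else 0) *\<^sub>R d) = of_int m *\<^sub>R \<delta>"
proof -
  have "(\<Sum>d\<in>\<Delta>. of_int (if d = \<delta> then m else 0) *\<^sub>R d) = (\<Sum>d\<in>\<Delta>. (if d = \<delta> then of_int m *\<^sub>R d else 0))"
    by (rule sum.cong[OF refl]) simp
  also have "\<dots> = of_int m *\<^sub>R \<delta>" unfolding sum.delta[OF finD] if_P[OF assms] ..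
  finally show ?thesis .
qed

lemma addrep: "(\<Sum>d\<in>\<Delta>. of_int (c d + e d) *\<^sub>R d) = (\<Sum>d\<in>\<Delta>. of_int (c d) *\<^sub>R d) + (\<Sum>d\<in>\<Delta>. of_int (e d) *\<^sub>R (d::'a))"
  unfolding sum.distrib[symmetric] by (rule sum.cong[OF refl]) (simp add: scaleR_add_left)

lemma simple_perm:
  assumes "\<delta> \<in> \<Delta>" "\<beta> \<in> P" "\<beta> \<noteq> \<delta>"
  shows "rs_refl \<delta> \<beta> \<in> P"
proof (rule ccontr)
  assume nP: "rs_refl \<delta> \<beta> \<notin> P"
  have dPhi: "\<delta> \<in> \<Phi>" using assms(1) Dsub by blast
  have bPhi: "\<beta> \<in> \<Phi>" using assms(2) P_sub by blast
  have "rs_refl \<delta> \<beta> \<in> \<Phi>" using rclosed[OF dPhi bPhi] .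
  then have "- rs_refl \<delta> \<beta> \<in> P" using PorN nP neg_iff by blast
  then obtain d where d: "- rs_refl \<delta> \<beta> = (\<Sum>\<delta>\<in>\<Delta>. of_int (d \<delta>) *\<^sub>R \<delta>)" "\<forall>\<delta>\<in>\<Delta>. d \<delta> \<ge> 0"
    unfolding pos_roots_def by blast
  obtain c where c: "\<beta> = (\<Sum>\<delta>\<in>\<Delta>. of_int (c \<delta>) *\<^sub>R \<delta>)" "\<forall>\<delta>\<in>\<Delta>. c \<delta> \<ge> 0"
    using assms(2) unfolding pos_roots_def by blast
  have "2 * (\<beta> \<bullet> \<delta>) / (\<delta> \<bullet> \<delta>) \<in> \<int>" using integ[OF dPhi bPhi] .
  then obtain m where m: "2 * (\<beta> \<bullet> \<delta>) / (\<delta> \<bullet> \<delta>) = of_int m" by (elim Ints_cases)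
  have sb: "rs_refl \<delta> \<beta> = \<beta> - of_int m *\<^sub>R \<delta>" unfolding rs_refl_def m ..
  have "(\<Sum>x\<in>\<Delta>. of_int (c x + d x) *\<^sub>R x) = \<beta> + - rs_refl \<delta> \<beta>"
    unfolding addrep c(1)[symmetric] d(1)[symmetric] ..
  also have "\<dots> = of_int m *\<^sub>R \<delta>" unfolding sb by simp
  also have "\<dots> = (\<Sum>x\<in>\<Delta>. of_int (if x = \<delta> then m else 0) *\<^sub>R x)" using single[OF assms(1)] by (rule sym)
  finally have eq: "(\<Sum>x\<in>\<Delta>. of_int (c x + d x) *\<^sub>R x) = (\<Sum>x\<in>\<Delta>. of_int (if x = \<delta> then m else 0) *\<^sub>R x)" .
  have c0: "\<forall>x\<in>\<Delta>. x \<noteq> \<delta> \<longrightarrow> c x = 0"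
  proof (intro ballI impI)
    fix x assume x: "x \<in> \<Delta>" "x \<noteq> \<delta>"
    have "c x + d x = (if x = \<delta> then m else 0)" using uniq[OF eq x(1)] .
    then have "c x + d x = 0" using x(2) by simp
    moreover have "c x \<ge> 0" "d x \<ge> 0" using c(2) d(2) x(1) by blast+
    ultimately show "c x = 0" by linarith
  qed
  have "\<beta> = (\<Sum>x\<in>\<Delta>. of_int (if x = \<delta> then c \<delta> else 0) *\<^sub>R x)"
    unfolding c(1) by (rule sum.cong[OF refl]) (use c0 in auto)
  also have "\<dots> = of_int (c \<delta>) *\<^sub>R \<delta>" using single[OF assms(1)] .
  finally have bc: "\<beta> = of_int (c \<delta>) *\<^sub>R \<delta>" .
  then have "of_int (c \<delta>) *\<^sub>R \<delta> \<in> \<Phi>" using bPhi by simp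
  then have "of_int (c \<delta>) = (1::real) \<or> of_int (c \<delta>) = (-1::real)" using reduced[OF dPhi] by blast
  then show False
  proof
    assume "of_int (c \<delta>) = (1::real)" then have "\<beta> = \<delta>" using bc by simp
    then show False using assms(3) by blast
  next
    assume "of_int (c \<delta>) = (-1::real)" then have "- \<beta> = \<delta>" using bc by simp
    then have "- \<beta> \<in> P" using D_pos[OF assms(1)] by simp
    then show False using disj assms(2) by blast
  qed
qed

end



context rs begin

abbreviation W where "W \<equiv> weyl_group \<Phi>"

lemma W_orth: "u \<in> W \<Longrightarrow> orth u"
proof (induction rule: weyl_group.induct)
  case weyl_id show ?case by (rule orth_id)
next
  case (weyl_step \<alpha> w) show ?case by (rule orth_comp[OF orth_rs weyl_step.IH])
qed

lemma W_lin: "u \<in> W \<Longrightarrow> linear u" using W_orth orth_linear by blast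

lemma W_perm: "u \<in> W \<Longrightarrow> u ` \<Phi> = \<Phi>"
proof (induction rule: weyl_group.induct)
  case weyl_id then show ?case by simp
next
  case (weyl_step \<alpha> w)
  have "(rs_refl \<alpha> \<circ> w) ` \<Phi> = rs_refl \<alpha> ` (w ` \<Phi>)" by (simp add: image_comp)
  also have "\<dots> = \<Phi>" using weyl_step crs unfolding crystallographic_root_system_def by simp
  finally show ?case .
qed

lemma W_in: "u \<in> W \<Longrightarrow> x \<in> \<Phi> \<Longrightarrow> u x \<in> \<Phi>" using W_perm by blast

lemma W_bij: "u \<in> W \<Longrightarrow> bij u"
proof (induction rule: weyl_group.induct)
  case weyl_id show ?case by (rule bij_id)
next
  case (weyl_step \<alpha> w) show ?case by (rule bij_comp[OF weyl_step.IH rs_bij[OF nzPhi[OF weyl_step.hyps(1)]]])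
qed

lemma W_snoc: "u \<in> W \<Longrightarrow> \<alpha> \<in> \<Phi> \<Longrightarrow> u \<circ> rs_refl \<alpha> \<in> W"
proof (induction rule: weyl_group.induct)
  case weyl_id
  have "rs_refl \<alpha> \<circ> id \<in> W" by (rule weyl_group.weyl_step[OF weyl_id.prems weyl_group.weyl_id])
  then show ?case by (metis comp_id id_comp)
next
  case (weyl_step \<beta> w)
  have "rs_refl \<beta> \<circ> (w \<circ> rs_refl \<alpha>) \<in> W"
    by (rule weyl_group.weyl_step[OF weyl_step.hyps(1) weyl_step.IH[OF weyl_step.prems]])
  then show ?case by (simp only: o_assoc)
qed

lemma W_inv: "u \<in> W \<Longrightarrow> inv u \<in> W"
proof (induction rule: weyl_group.induct)
  case weyl_id show ?case unfolding inv_id by (rule weyl_group.weyl_id)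
next
  case (weyl_step \<alpha> w)
  have "inv (rs_refl \<alpha> \<circ> w) = inv w \<circ> inv (rs_refl \<alpha>)"
    by (rule o_inv_distrib) (use weyl_step W_bij rs_bij nzPhi in auto)
  also have "\<dots> = inv w \<circ> rs_refl \<alpha>" unfolding rs_inv[OF nzPhi[OF weyl_step.hyps(1)]] ..
  finally show ?case using W_snoc[OF weyl_step.IH weyl_step.hyps(1)] by (simp only:)
qed

lemma sprod_W: "set xs \<subseteq> \<Delta> \<Longrightarrow> sprod xs \<in> W"
proof (induction xs)
  case Nil show ?case unfolding sprod_Nil by (rule weyl_group.weyl_id)
next
  case (Cons a xs)
  have "a \<in> \<Phi>" using Cons.prems Dsub by auto
  moreover have "sprod xs \<in> W" using Cons by auto
  ultimately show ?case unfolding sprod_Cons by (rule weyl_group.weyl_step)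
qed

definition Nf where "Nf u = {\<gamma>\<in>P. u \<gamma> \<in> N}"

lemma finP: "finite P" using P_sub finPhi finite_subset by blast
lemma finNf: "finite (Nf u)" unfolding Nf_def using finP by simp

lemma Nf_id: "Nf id = {}" unfolding Nf_def using disjN by auto

lemma F1a: assumes "u \<in> W" "\<delta> \<in> \<Delta>"
  shows "card (Nf (u \<circ> rs_refl \<delta>)) \<le> card (Nf u) + 1"
proof -
  have dnz: "\<delta> \<noteq> 0" using assms(2) Dsub nzPhi by blast
  have "Nf (u \<circ> rs_refl \<delta>) \<subseteq> insert \<delta> (rs_refl \<delta> ` Nf u)"
  proof
    fix \<gamma> assume g: "\<gamma> \<in> Nf (u \<circ> rs_refl \<delta>)"
    show "\<gamma> \<in> insert \<delta> (rs_refl \<delta> ` Nf u)"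
    proof (cases "\<gamma> = \<delta>")
      case False
      have "rs_refl \<delta> \<gamma> \<in> P" using simple_perm[OF assms(2) _ False] g unfolding Nf_def by blast
      then have "rs_refl \<delta> \<gamma> \<in> Nf u" using g unfolding Nf_def by simp
      moreover have "\<gamma> = rs_refl \<delta> (rs_refl \<delta> \<gamma>)" using rs_invol[OF dnz] by simp
      ultimately show ?thesis by blast
    qed simp
  qed
  then have "card (Nf (u \<circ> rs_refl \<delta>)) \<le> card (insert \<delta> (rs_refl \<delta> ` Nf u))"
    by (intro card_mono) (simp_all add: finNf)
  also have "\<dots> \<le> card (rs_refl \<delta> ` Nf u) + 1" by (simp add: card_insert_if finNf)
  also have "\<dots> \<le> card (Nf u) + 1" using card_image_le[OF finNf] by simp
  finally show ?thesis .
qed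

lemma F1b: assumes "u \<in> W" "\<delta> \<in> \<Delta>" "u \<delta> \<in> P"
  shows "card (Nf (u \<circ> rs_refl \<delta>)) \<ge> card (Nf u) + 1"
proof -
  have dnz: "\<delta> \<noteq> 0" using assms(2) Dsub nzPhi by blast
  have dP: "\<delta> \<in> P" using D_pos assms(2) by blast
  have lin: "linear u" using W_lin assms(1) .
  have sub: "insert \<delta> (rs_refl \<delta> ` Nf u) \<subseteq> Nf (u \<circ> rs_refl \<delta>)"
  proof
    fix x assume "x \<in> insert \<delta> (rs_refl \<delta> ` Nf u)"
    then show "x \<in> Nf (u \<circ> rs_refl \<delta>)"
    proof
      assume x: "x = \<delta>"
      have "u (rs_refl \<delta> \<delta>) = - u \<delta>" using rs_self[OF dnz] linear_neg[OF lin] by simp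
      then show ?thesis using x dP assms(3) unfolding Nf_def by (simp add: neg_iff)
    next
      assume "x \<in> rs_refl \<delta> ` Nf u"
      then obtain \<gamma> where g: "\<gamma> \<in> Nf u" "x = rs_refl \<delta> \<gamma>" by blast
      have "\<gamma> \<noteq> \<delta>" using g(1) assms(3) disjN unfolding Nf_def by blast
      then have "x \<in> P" using simple_perm[OF assms(2)] g unfolding Nf_def by blast
      moreover have "u (rs_refl \<delta> x) = u \<gamma>" using g(2) rs_invol[OF dnz] by simp
      ultimately show ?thesis using g(1) unfolding Nf_def by simp
    qed
  qed
  have nin: "\<delta> \<notin> rs_refl \<delta> ` Nf u"
  proof
    assume "\<delta> \<in> rs_refl \<delta> ` Nf u"
    then obtain \<gamma> where g: "\<gamma> \<in> Nf u" "\<delta> = rs_refl \<delta> \<gamma>" by blast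
    then have "\<gamma> = - \<delta>" using rs_invol[OF dnz, of \<gamma>] rs_self[OF dnz] by metis
    then show False using g(1) dP disj unfolding Nf_def by auto
  qed
  have inj: "inj (rs_refl \<delta>)" using rs_bij[OF dnz] bij_is_inj by blast
  have "card (Nf u) + 1 = card (insert \<delta> (rs_refl \<delta> ` Nf u))"
    using nin card_image[OF inj_on_subset[OF inj subset_UNIV]] by (simp add: finNf)
  also have "\<dots> \<le> card (Nf (u \<circ> rs_refl \<delta>))" by (rule card_mono[OF finNf sub])
  finally show ?thesis by simp
qed

end



lemma rs_negroot: "rs_refl (- a) = rs_refl a"
  by (simp add: fun_eq_iff rs_refl_def)

context rs begin

lemma deletion:
  "set xs \<subseteq> \<Delta> \<Longrightarrow> \<delta> \<in> \<Delta> \<Longrightarrow> sprod xs \<delta> \<in> N \<Longrightarrow>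
   \<exists>ys. set ys \<subseteq> \<Delta> \<and> length ys + 1 = length xs \<and> sprod xs \<circ> rs_refl \<delta> = sprod ys"
proof (induction xs)
  case Nil
  have "\<delta> \<in> N" using Nil(3) unfolding sprod_Nil by simp
  then show ?case using D_pos[OF Nil(2)] disjN by blast
next
  case (Cons a xs)
  let ?u = "sprod xs"
  have uW: "?u \<in> W" using sprod_W Cons.prems by simp
  have aD: "a \<in> \<Delta>" using Cons.prems by simp
  have xsD: "set xs \<subseteq> \<Delta>" using Cons.prems by simp
  have anz: "a \<noteq> 0" using aD Dsub nzPhi by blast
  have gPhi: "?u \<delta> \<in> \<Phi>" using W_in[OF uW] Cons.prems Dsub by blast
  show ?case
  proof (cases "?u \<delta> \<in> N")
    case True
    then obtain ys where ys: "set ys \<subseteq> \<Delta>" "length ys + 1 = length xs" "?u \<circ> rs_refl \<delta> = sprod ys"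
      using Cons.IH[OF xsD Cons.prems(2) True] by blast
    have "sprod (a # xs) \<circ> rs_refl \<delta> = sprod (a # ys)"
      unfolding sprod_Cons o_assoc[symmetric] ys(3) ..
    then show ?thesis using ys aD by (intro exI[of _ "a # ys"]) auto
  next
    case False
    then have gP: "?u \<delta> \<in> P" using PorN gPhi by blast
    have "rs_refl a (?u \<delta>) \<in> N" using Cons.prems(3) by (simp add: sprod_Cons)
    then have ga: "?u \<delta> = a" using simple_perm[OF aD gP] disjN by blast
    have conj: "rs_refl a \<circ> ?u = ?u \<circ> rs_refl \<delta>"
      using rs_conj[OF W_orth[OF uW], of \<delta>] ga by (simp add: fun_eq_iff)
    have "sprod (a # xs) \<circ> rs_refl \<delta> = rs_refl a \<circ> (?u \<circ> rs_refl \<delta>)"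
      unfolding sprod_Cons by (simp only: o_assoc)
    also have "\<dots> = rs_refl a \<circ> (rs_refl a \<circ> ?u)" by (simp only: conj)
    also have "\<dots> = ?u" using rs_invol[OF anz] by (simp add: fun_eq_iff)
    finally show ?thesis using Cons.prems by (intro exI[of _ xs]) auto
  qed
qed

lemma len_easy: "set xs \<subseteq> \<Delta> \<Longrightarrow> card (Nf (sprod xs)) \<le> length xs"
proof (induction xs rule: rev_induct)
  case Nil show ?case unfolding sprod_Nil Nf_id by simp
next
  case (snoc x xs)
  have "card (Nf (sprod (xs @ [x]))) \<le> card (Nf (sprod xs)) + 1"
    unfolding sprod_snoc by (rule F1a) (use sprod_W snoc.prems in auto)
  then show ?case using snoc by simp
qed

lemma len_hard: "set xs \<subseteq> \<Delta> \<Longrightarrow> (\<forall>zs. set zs \<subseteq> \<Delta> \<longrightarrow> sprod zs = sprod xs \<longrightarrow> length xs \<le> length zs)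
   \<Longrightarrow> length xs \<le> card (Nf (sprod xs))"
proof (induction xs rule: rev_induct)
  case Nil then show ?case by simp
next
  case (snoc x xs)
  have xsD: "set xs \<subseteq> \<Delta>" and xD: "x \<in> \<Delta>" using snoc.prems by auto
  have min: "\<forall>zs. set zs \<subseteq> \<Delta> \<longrightarrow> sprod zs = sprod xs \<longrightarrow> length xs \<le> length zs"
  proof (intro allI impI)
    fix zs assume z: "set zs \<subseteq> \<Delta>" "sprod zs = sprod xs"
    have "set (zs @ [x]) \<subseteq> \<Delta>" using z xD by auto
    moreover have "sprod (zs @ [x]) = sprod (xs @ [x])" unfolding sprod_snoc z(2) ..
    ultimately have "length (xs @ [x]) \<le> length (zs @ [x])" using snoc.prems(2) by blast
    then show "length xs \<le> length zs" by simp
  qed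
  have IH: "length xs \<le> card (Nf (sprod xs))" using snoc.IH[OF xsD min] .
  have uW: "sprod xs \<in> W" using sprod_W xsD by blast
  show ?case
  proof (cases "sprod xs x \<in> P")
    case True
    have "card (Nf (sprod xs)) + 1 \<le> card (Nf (sprod xs \<circ> rs_refl x))" by (rule F1b[OF uW xD True])
    then have "Suc (length xs) \<le> card (Nf (sprod xs \<circ> rs_refl x))" using IH by linarith
    then show ?thesis unfolding sprod_snoc length_append_singleton .
  next
    case False
    then have "sprod xs x \<in> N" using PorN W_in[OF uW] xD Dsub by blast
    then obtain ys where ys: "set ys \<subseteq> \<Delta>" "length ys + 1 = length xs" "sprod xs \<circ> rs_refl x = sprod ys"
      using deletion[OF xsD xD] by blast
    have "sprod ys = sprod (xs @ [x])" unfolding sprod_snoc ys(3) ..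
    then have "length (xs @ [x]) \<le> length ys" using snoc.prems(2) ys(1) by blast
    then show ?thesis using ys(2) by simp
  qed
qed

end



context rs begin

lemma gen_pos:
  assumes lin: "linear f" and f1: "\<forall>x\<in>\<Delta>. f x = (1::real)"
  shows "\<beta> \<in> P \<Longrightarrow> f \<beta> < real n \<Longrightarrow> \<exists>xs. set xs \<subseteq> \<Delta> \<and> rs_refl \<beta> = sprod xs"
proof (induction n arbitrary: \<beta>)
  have fpos: "f b \<ge> 0" if bP: "b \<in> P" for b
  proof -
    obtain c where c: "b = (\<Sum>\<delta>\<in>\<Delta>. of_int (c \<delta>) *\<^sub>R \<delta>)" "\<forall>\<delta>\<in>\<Delta>. c \<delta> \<ge> 0"
      using bP unfolding pos_roots_def by blast
    have "f (\<Sum>\<delta>\<in>\<Delta>. of_int (c \<delta>) *\<^sub>R \<delta>) = (\<Sum>\<delta>\<in>\<Delta>. of_int (c \<delta>))"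
      using f1 by (simp add: linear_sum[OF lin] linear_scale[OF lin])
    also have "\<dots> \<ge> 0" using c(2) by (intro sum_nonneg) auto
    finally show ?thesis using c(1) by (simp only:)
  qed
  {
    case 0 then show ?case using fpos by force
  next
    case (Suc n \<beta>)
    show ?case
    proof (cases "\<beta> \<in> \<Delta>")
      case True
      then show ?thesis by (intro exI[of _ "[\<beta>]"]) (simp add: sprod_Cons sprod_Nil)
    next
      case False
      obtain c where c: "\<beta> = (\<Sum>\<delta>\<in>\<Delta>. of_int (c \<delta>) *\<^sub>R \<delta>)" "\<forall>\<delta>\<in>\<Delta>. c \<delta> \<ge> 0"
        using Suc.prems(1) unfolding pos_roots_def by blast
      have bPhi: "\<beta> \<in> \<Phi>" using Suc.prems(1) P_sub by blast
      have "\<beta> \<bullet> (\<Sum>\<delta>\<in>\<Delta>. of_int (c \<delta>) *\<^sub>R \<delta>) = (\<Sum>\<delta>\<in>\<Delta>. of_int (c \<delta>) * (\<beta> \<bullet> \<delta>))"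
        by (simp add: inner_sum_right)
      then have bb: "\<beta> \<bullet> \<beta> = (\<Sum>\<delta>\<in>\<Delta>. of_int (c \<delta>) * (\<beta> \<bullet> \<delta>))" using c(1) by (simp only:)
      have "\<beta> \<bullet> \<beta> > 0" using nzPhi[OF bPhi] by simp
      then obtain \<delta> where d: "\<delta> \<in> \<Delta>" "\<beta> \<bullet> \<delta> > 0"
      proof -
        assume r: "\<And>\<delta>. \<delta> \<in> \<Delta> \<Longrightarrow> 0 < \<beta> \<bullet> \<delta> \<Longrightarrow> thesis"
        show thesis
        proof (rule ccontr)
          assume "\<not> thesis"
          then have "\<forall>\<delta>\<in>\<Delta>. \<beta> \<bullet> \<delta> \<le> 0" using r by force
          then have "(\<Sum>\<delta>\<in>\<Delta>. of_int (c \<delta>) * (\<beta> \<bullet> \<delta>)) \<le> 0"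
            using c(2) by (intro sum_nonpos) (simp add: mult_nonneg_nonpos)
          then show False using bb \<open>\<beta> \<bullet> \<beta> > 0\<close> by linarith
        qed
      qed
      have dPhi: "\<delta> \<in> \<Phi>" using d(1) Dsub by blast
      have dd: "\<delta> \<bullet> \<delta> > 0" using nzPhi[OF dPhi] by simp
      obtain m where m: "2 * (\<beta> \<bullet> \<delta>) / (\<delta> \<bullet> \<delta>) = of_int m" using integ[OF dPhi bPhi] by (elim Ints_cases)
      have "(of_int m :: real) > 0" unfolding m[symmetric] using d(2) dd by simp
      then have m1: "m \<ge> 1" by simp
      have sb: "rs_refl \<delta> \<beta> = \<beta> - of_int m *\<^sub>R \<delta>" unfolding rs_refl_def m ..
      have bd: "\<beta> \<noteq> \<delta>" using False d(1) by blast
      have gP: "rs_refl \<delta> \<beta> \<in> P" using simple_perm[OF d(1) Suc.prems(1) bd] .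
      have "f (rs_refl \<delta> \<beta>) = f \<beta> - of_int m"
        unfolding sb using f1 d(1) by (simp add: linear_diff[OF lin] linear_scale[OF lin])
      then have "f (rs_refl \<delta> \<beta>) < real n" using Suc.prems(2) m1 by simp
      then obtain ys where ys: "set ys \<subseteq> \<Delta>" "rs_refl (rs_refl \<delta> \<beta>) = sprod ys" using Suc.IH[OF gP] by blast
      have dnz: "\<delta> \<noteq> 0" using nzPhi[OF dPhi] .
      have "rs_refl \<beta> = rs_refl \<delta> \<circ> rs_refl (rs_refl \<delta> \<beta>) \<circ> rs_refl \<delta>"
      proof
        fix x
        have "rs_refl (rs_refl \<delta> \<beta>) (rs_refl \<delta> x) = rs_refl \<delta> (rs_refl \<beta> x)"
          by (rule rs_conj[OF orth_rs])
        then show "rs_refl \<beta> x = (rs_refl \<delta> \<circ> rs_refl (rs_refl \<delta> \<beta>) \<circ> rs_refl \<delta>) x"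
          using rs_invol[OF dnz] by simp
      qed
      also have "\<dots> = sprod ([\<delta>] @ ys @ [\<delta>])"
        unfolding sprod_append sprod_Cons sprod_Nil ys(2) by (simp add: fun_eq_iff)
      finally show ?thesis using ys(1) d(1) by (intro exI[of _ "[\<delta>] @ ys @ [\<delta>]"]) auto
    qed
  }
qed

lemma refl_expr: assumes "\<beta> \<in> \<Phi>" shows "\<exists>xs. set xs \<subseteq> \<Delta> \<and> rs_refl \<beta> = sprod xs"
proof -
  obtain f :: "'a \<Rightarrow> real" where f: "linear f" "\<forall>x\<in>\<Delta>. f x = 1"
    using linear_independent_extend[OF indep, of "\<lambda>_. 1"] by blast
  obtain n where n: "f \<beta> < real n" "f (- \<beta>) < real n"
    using reals_Archimedean2[of "max (f \<beta>) (f (- \<beta>))"] by auto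
  show ?thesis
  proof (cases "\<beta> \<in> P")
    case True then show ?thesis using gen_pos[OF f] n by blast
  next
    case False
    then have "- \<beta> \<in> P" using PorN assms neg_iff by blast
    then show ?thesis using gen_pos[OF f, of "- \<beta>" n] n rs_negroot by metis
  qed
qed

lemma W_expr: "u \<in> W \<Longrightarrow> \<exists>xs. set xs \<subseteq> \<Delta> \<and> u = sprod xs"
proof (induction rule: weyl_group.induct)
  case weyl_id then show ?case by (intro exI[of _ "[]"]) (simp add: sprod_Nil)
next
  case (weyl_step \<alpha> w)
  obtain xs where xs: "set xs \<subseteq> \<Delta>" "rs_refl \<alpha> = sprod xs" using refl_expr weyl_step by blast
  obtain ys where ys: "set ys \<subseteq> \<Delta>" "w = sprod ys" using weyl_step by blast
  have "rs_refl \<alpha> \<circ> w = sprod (xs @ ys)" unfolding sprod_append xs(2) ys(2) ..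
  then show ?case using xs(1) ys(1) by (intro exI[of _ "xs @ ys"]) auto
qed

lemma len_eq: assumes "u \<in> W" shows "weyl_length \<Delta> u = card (Nf u)"
proof -
  have wl: "weyl_length \<Delta> u = (LEAST k. \<exists>xs. length xs = k \<and> set xs \<subseteq> \<Delta> \<and> u = sprod xs)"
    unfolding weyl_length_def sprod_def ..
  obtain xs0 where "set xs0 \<subseteq> \<Delta>" "u = sprod xs0" using W_expr[OF assms] by blast
  then have ex: "\<exists>k xs. length xs = k \<and> set xs \<subseteq> \<Delta> \<and> u = sprod xs" by blast
  obtain xs where xs: "length xs = weyl_length \<Delta> u" "set xs \<subseteq> \<Delta>" "u = sprod xs"
    using LeastI_ex[OF ex] unfolding wl by blast
  have min: "\<forall>zs. set zs \<subseteq> \<Delta> \<longrightarrow> sprod zs = sprod xs \<longrightarrow> length xs \<le> length zs"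
  proof (intro allI impI)
    fix zs assume "set zs \<subseteq> \<Delta>" "sprod zs = sprod xs"
    then have "\<exists>ys. length ys = length zs \<and> set ys \<subseteq> \<Delta> \<and> u = sprod ys" using xs(3) by metis
    then have "weyl_length \<Delta> u \<le> length zs" unfolding wl by (rule Least_le)
    then show "length xs \<le> length zs" using xs(1) by simp
  qed
  show ?thesis using len_hard[OF xs(2) min] len_easy[OF xs(2)] xs(1,3) by simp
qed

end



lemma sum_list_replicate_scale: "sum_list (replicate n (z::'a::real_vector)) = real n *\<^sub>R z"
  by (induction n) (simp_all add: scaleR_add_left)

context rs begin

lemma inv_card: assumes "u \<in> W" shows "card (inv_set \<Phi> \<Delta> u) = card (Nf u)"
proof -
  have b: "bij u" using W_bij[OF assms] .
  have lin: "linear u" using W_lin[OF assms] .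
  have "inv_set \<Phi> \<Delta> u = (\<lambda>\<gamma>. - u \<gamma>) ` Nf u"
  proof
    show "inv_set \<Phi> \<Delta> u \<subseteq> (\<lambda>\<gamma>. - u \<gamma>) ` Nf u"
    proof
      fix \<beta> assume "\<beta> \<in> inv_set \<Phi> \<Delta> u"
      then have bP: "\<beta> \<in> P" and bN: "inv u \<beta> \<in> N" unfolding inv_set_def by auto
      let ?g = "- inv u \<beta>"
      have "u ?g = - \<beta>" using linear_neg[OF lin] bij_inv_eq_iff[OF b] by metis
      then have "?g \<in> Nf u" using bP bN unfolding Nf_def by (simp add: neg_iff)
      moreover have "\<beta> = - u ?g" using \<open>u ?g = - \<beta>\<close> by simp
      ultimately show "\<beta> \<in> (\<lambda>\<gamma>. - u \<gamma>) ` Nf u" by blast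
    qed
  next
    show "(\<lambda>\<gamma>. - u \<gamma>) ` Nf u \<subseteq> inv_set \<Phi> \<Delta> u"
    proof
      fix \<beta> assume "\<beta> \<in> (\<lambda>\<gamma>. - u \<gamma>) ` Nf u"
      then obtain \<gamma> where g: "\<gamma> \<in> Nf u" "\<beta> = - u \<gamma>" by blast
      have "u (- \<gamma>) = \<beta>" using g(2) linear_neg[OF lin] by simp
      then have "inv u \<beta> = - \<gamma>" using bij_inv_eq_iff[OF b] by metis
      then show "\<beta> \<in> inv_set \<Phi> \<Delta> u" using g unfolding Nf_def inv_set_def by (simp add: neg_iff)
    qed
  qed
  moreover have "inj_on (\<lambda>\<gamma>. - u \<gamma>) (Nf u)"
    using bij_is_inj[OF b] unfolding inj_on_def by auto
  ultimately show ?thesis using card_image by metis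
qed

lemma Kpos: assumes "\<alpha> \<in> P" "\<beta> \<in> P" "rs_refl \<alpha> \<beta> \<in> N"
  shows "\<exists>m::int. m \<ge> 1 \<and> rs_refl \<alpha> \<beta> = \<beta> - of_int m *\<^sub>R \<alpha>"
proof -
  have aPhi: "\<alpha> \<in> \<Phi>" and bPhi: "\<beta> \<in> \<Phi>" using assms P_sub by auto
  obtain m where m: "2 * (\<beta> \<bullet> \<alpha>) / (\<alpha> \<bullet> \<alpha>) = of_int m" using integ[OF aPhi bPhi] by (elim Ints_cases)
  have sb: "rs_refl \<alpha> \<beta> = \<beta> - of_int m *\<^sub>R \<alpha>" unfolding rs_refl_def m ..
  have "m \<ge> 1"
  proof (rule ccontr)
    assume "\<not> m \<ge> 1"
    then have "- m \<ge> 0" by simp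
    moreover have "rs_refl \<alpha> \<beta> = \<beta> + of_int (- m) *\<^sub>R \<alpha>" unfolding sb by simp
    ultimately have "rs_refl \<alpha> \<beta> \<in> P" using sum_rep[OF assms(2,1)] rclosed[OF aPhi bPhi] by blast
    then show False using assms(3) disjN by blast
  qed
  then show ?thesis using sb by blast
qed

end



context rs begin

lemma main:
  assumes hs: "hessenberg_set \<Phi> \<Delta> \<hh>"
    and vW: "v \<in> W" and wW: "w \<in> W"
    and cov: "is_cover \<Phi> \<Delta> v w"
  shows "int (card (inv_set \<Phi> \<Delta> v)) - int (card (P - \<hh>))
           \<le> int (card (hess_inv_set \<Phi> \<Delta> \<hh> v))
       \<and> card (hess_inv_set \<Phi> \<Delta> \<hh> v) \<le> card (hess_inv_set \<Phi> \<Delta> \<hh> w) + 1"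
proof
  have hP: "\<hh> \<subseteq> P" using hs unfolding hessenberg_set_def by blast
  have hsU: "\<And>x y. x \<in> P - \<hh> \<Longrightarrow> y \<in> P \<Longrightarrow> root_prec \<Phi> \<Delta> x y \<Longrightarrow> y \<in> P - \<hh>"
    using hs unfolding hessenberg_set_def by blast
  have hN: "\<And>x. x \<in> uminus ` \<hh> \<Longrightarrow> x \<in> N" using hP unfolding neg_roots_def by blast
  let ?Nv = "inv_set \<Phi> \<Delta> v" and ?Hv = "hess_inv_set \<Phi> \<Delta> \<hh> v"
  have ivb: "bij (inv v)" using W_bij[OF W_inv[OF vW]] .
  have finNv: "finite ?Nv" unfolding inv_set_def using finP by simp
  have "card (?Nv - ?Hv) \<le> card (P - \<hh>)"
  proof (rule card_inj_on_le[of "\<lambda>\<beta>. - inv v \<beta>"])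
    show "inj_on (\<lambda>\<beta>. - inv v \<beta>) (?Nv - ?Hv)" using bij_is_inj[OF ivb] unfolding inj_on_def by auto
    show "(\<lambda>\<beta>. - inv v \<beta>) ` (?Nv - ?Hv) \<subseteq> P - \<hh>"
    proof
      fix y assume "y \<in> (\<lambda>\<beta>. - inv v \<beta>) ` (?Nv - ?Hv)"
      then obtain \<beta> where b: "\<beta> \<in> ?Nv" "\<beta> \<notin> ?Hv" "y = - inv v \<beta>" by blast
      have "y \<in> P" using b unfolding inv_set_def by (simp add: neg_iff)
      moreover have "y \<notin> \<hh>"
      proof
        assume "y \<in> \<hh>"
        then have "inv v \<beta> \<in> uminus ` \<hh>" using b(3) by (metis image_eqI minus_minus)
        then show False using b(1,2) unfolding inv_set_def hess_inv_set_def by blast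
      qed
      ultimately show "y \<in> P - \<hh>" by blast
    qed
    show "finite (P - \<hh>)" using finP by simp
  qed
  moreover have "card ?Nv \<le> card ?Hv + card (?Nv - ?Hv)"
  proof -
    have "?Nv \<subseteq> ?Hv \<union> (?Nv - ?Hv)" by blast
    then have "card ?Nv \<le> card (?Hv \<union> (?Nv - ?Hv))"
      by (rule card_mono[rotated]) (simp add: finNv hess_inv_set_def finP)
    also have "\<dots> \<le> card ?Hv + card (?Nv - ?Hv)" by (rule card_Un_le)
    finally show ?thesis .
  qed
  ultimately show "int (card ?Nv) - int (card (P - \<hh>)) \<le> int (card ?Hv)" by linarith
next
  show "card (hess_inv_set \<Phi> \<Delta> \<hh> v) \<le> card (hess_inv_set \<Phi> \<Delta> \<hh> w) + 1"
  proof -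
  have hP: "\<hh> \<subseteq> P" using hs unfolding hessenberg_set_def by blast
  have hsU: "\<And>x y. x \<in> P - \<hh> \<Longrightarrow> y \<in> P \<Longrightarrow> root_prec \<Phi> \<Delta> x y \<Longrightarrow> y \<in> P - \<hh>"
    using hs unfolding hessenberg_set_def by blast
  have hN: "\<And>x. x \<in> uminus ` \<hh> \<Longrightarrow> x \<in> N" using hP unfolding neg_roots_def by blast
  obtain \<alpha> where al: "\<alpha> \<in> P" "v = rs_refl \<alpha> \<circ> w" "inv v \<alpha> \<in> N"
      "weyl_length \<Delta> v = weyl_length \<Delta> w + 1"
    using cov unfolding is_cover_def by blast
  have aPhi: "\<alpha> \<in> \<Phi>" using al(1) P_sub by blast
  have anz: "\<alpha> \<noteq> 0" using nzPhi[OF aPhi] .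
  define a where "a = inv w"
  have aW: "a \<in> W" unfolding a_def using W_inv[OF wW] .
  have alin: "linear a" using W_lin[OF aW] .
  have iv: "inv v = a \<circ> rs_refl \<alpha>"
  proof -
    have "inv v = inv w \<circ> inv (rs_refl \<alpha>)" unfolding al(2)
      by (rule o_inv_distrib[OF rs_bij[OF anz] W_bij[OF wW]])
    then show ?thesis unfolding rs_inv[OF anz] a_def .
  qed
  have ivx: "\<And>x. inv v x = a (rs_refl \<alpha> x)" using iv by simp
  have ainP: "\<And>x. x \<in> \<Phi> \<Longrightarrow> a x \<in> \<Phi>" using W_in[OF aW] .
  have sinP: "\<And>x. x \<in> \<Phi> \<Longrightarrow> rs_refl \<alpha> x \<in> \<Phi>" using rclosed[OF aPhi] .
  have sinv: "\<And>x. rs_refl \<alpha> (rs_refl \<alpha> x) = x" using rs_invol[OF anz] .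
  have ssa: "rs_refl \<alpha> \<alpha> = - \<alpha>" using rs_self[OF anz] .
  have aneg: "\<And>x. a (- x) = - a x" using linear_neg[OF alin] .
  let ?Nv = "{\<beta>\<in>P. a (rs_refl \<alpha> \<beta>) \<in> N}" and ?Nw = "{\<beta>\<in>P. a \<beta> \<in> N}"
  have Nv_eq: "inv_set \<Phi> \<Delta> v = ?Nv" unfolding inv_set_def ivx ..
  have Nw_eq: "inv_set \<Phi> \<Delta> w = ?Nw" unfolding inv_set_def a_def ..
  have cardeq: "card ?Nv = card ?Nw + 1"
    using al(4) len_eq[OF vW] len_eq[OF wW] inv_card[OF vW] inv_card[OF wW] Nv_eq Nw_eq by simp
  have aaP: "a \<alpha> \<in> P"
  proof -
    have "a (rs_refl \<alpha> \<alpha>) \<in> N" using al(3) ivx by simp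
    then have "- a \<alpha> \<in> N" unfolding ssa aneg .
    then show ?thesis using neg_iff by simp
  qed
  have K: False if b0: "\<beta>0 \<in> P" "\<beta>0 \<noteq> \<alpha>" "rs_refl \<alpha> \<beta>0 \<in> N" "a \<beta>0 \<in> P" "a (rs_refl \<alpha> \<beta>0) \<in> N" for \<beta>0
  proof -
    define \<psi> where "\<psi> \<gamma> = (if rs_refl \<alpha> \<gamma> \<in> P then rs_refl \<alpha> \<gamma> else \<gamma>)" for \<gamma>
    have img: "\<psi> ` ?Nw \<subseteq> ?Nv - {\<alpha>, \<beta>0}"
    proof
      fix y assume "y \<in> \<psi> ` ?Nw"
      then obtain \<gamma> where g: "\<gamma> \<in> P" "a \<gamma> \<in> N" "y = \<psi> \<gamma>" by blast
      have gPhi: "\<gamma> \<in> \<Phi>" using g(1) P_sub by blast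
      show "y \<in> ?Nv - {\<alpha>, \<beta>0}"
      proof (cases "rs_refl \<alpha> \<gamma> \<in> P")
        case True
        then have y: "y = rs_refl \<alpha> \<gamma>" using g(3) \<psi>_def by simp
        have "y \<in> ?Nv" using True g(2) sinv y by simp
        moreover have "y \<noteq> \<alpha>"
        proof
          assume "y = \<alpha>"
          then have "\<gamma> = - \<alpha>" using sinv[of \<gamma>] ssa y by metis
          then show False using g(1) al(1) disj by auto
        qed
        moreover have "y \<noteq> \<beta>0"
        proof
          assume "y = \<beta>0"
          then have "rs_refl \<alpha> \<beta>0 = \<gamma>" using sinv y by metis
          then show False using g(1) b0(3) disjN by auto
        qed
        ultimately show ?thesis by blast
      next
        case False
        then have y: "y = \<gamma>" using g(3) \<psi>_def by simp
        have "rs_refl \<alpha> \<gamma> \<in> N" using False PorN sinP[OF gPhi] by blast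
        then obtain m where m: "m \<ge> 1" "rs_refl \<alpha> \<gamma> = \<gamma> - of_int m *\<^sub>R \<alpha>"
          using Kpos[OF al(1) g(1)] by blast
        have e: "- a (rs_refl \<alpha> \<gamma>) = - a \<gamma> + of_int m *\<^sub>R a \<alpha>"
          unfolding m(2) linear_diff[OF alin] linear_scale[OF alin] by simp
        have "- a (rs_refl \<alpha> \<gamma>) \<in> P"
          by (rule sum_rep[OF _ aaP _ _ e]) (use g(2) neg_iff m(1) negclosed ainP sinP gPhi in auto)
        then have "a (rs_refl \<alpha> \<gamma>) \<in> N" using neg_iff by simp
        then have "y \<in> ?Nv" using y g(1) by simp
        moreover have "y \<noteq> \<alpha>" using y g(2) aaP disjN by blast
        moreover have "y \<noteq> \<beta>0" using y g(2) b0(4) disjN by blast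
        ultimately show ?thesis by blast
      qed
    qed
    have inj: "inj_on \<psi> ?Nw"
    proof
      fix x y assume x: "x \<in> ?Nw" and y: "y \<in> ?Nw" and e: "\<psi> x = \<psi> y"
      show "x = y"
      proof (cases "rs_refl \<alpha> x \<in> P"; cases "rs_refl \<alpha> y \<in> P")
        assume "rs_refl \<alpha> x \<in> P" "rs_refl \<alpha> y \<in> P"
        then have "rs_refl \<alpha> x = rs_refl \<alpha> y" using e \<psi>_def by simp
        then show ?thesis using sinv by metis
      next
        assume "rs_refl \<alpha> x \<notin> P" "rs_refl \<alpha> y \<notin> P"
        then show ?thesis using e \<psi>_def by simp
      next
        assume a1: "rs_refl \<alpha> x \<in> P" "rs_refl \<alpha> y \<notin> P"
        then have "rs_refl \<alpha> x = y" using e \<psi>_def by simp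
        then have "rs_refl \<alpha> y = x" using sinv by metis
        then show ?thesis using a1 x by simp
      next
        assume a1: "rs_refl \<alpha> x \<notin> P" "rs_refl \<alpha> y \<in> P"
        then have "x = rs_refl \<alpha> y" using e \<psi>_def by simp
        then have "rs_refl \<alpha> x = y" using sinv by metis
        then show ?thesis using a1 y by simp
      qed
    qed
    have finNv: "finite ?Nv" using finP by simp
    have "card ?Nw \<le> card (?Nv - {\<alpha>, \<beta>0})"
      by (rule card_inj_on_le[OF inj img]) (simp add: finNv)
    moreover have "\<alpha> \<in> ?Nv"
    proof -
      have "a (rs_refl \<alpha> \<alpha>) \<in> N" unfolding ssa aneg using aaP neg_iff by simp
      then show ?thesis using al(1) by simp
    qed
    moreover have "\<beta>0 \<in> ?Nv" using b0 by simp
    ultimately have c1: "card ?Nw \<le> card ?Nv - 2" and c2: "2 \<le> card ?Nv"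
      using b0(2) finNv card_mono[OF finNv, of "{\<alpha>, \<beta>0}"]
      by (simp_all add: card_Diff_subset)
    then have "card ?Nw + 2 \<le> card ?Nv" by linarith
    then show False using cardeq by simp
  qed
  let ?Hv = "{\<beta>\<in>P. a (rs_refl \<alpha> \<beta>) \<in> uminus ` \<hh>}" and ?Hw = "{\<beta>\<in>P. a \<beta> \<in> uminus ` \<hh>}"
  have Hv_eq: "hess_inv_set \<Phi> \<Delta> \<hh> v = ?Hv" unfolding hess_inv_set_def ivx ..
  have Hw_eq: "hess_inv_set \<Phi> \<Delta> \<hh> w = ?Hw" unfolding hess_inv_set_def a_def ..
  define \<phi> where "\<phi> \<gamma> = (if rs_refl \<alpha> \<gamma> \<in> P then rs_refl \<alpha> \<gamma> else \<gamma>)" for \<gamma>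
  have img: "\<phi> ` (?Hv - {\<alpha>}) \<subseteq> ?Hw"
  proof
    fix y assume "y \<in> \<phi> ` (?Hv - {\<alpha>})"
    then obtain \<beta> where b: "\<beta> \<in> P" "a (rs_refl \<alpha> \<beta>) \<in> uminus ` \<hh>" "\<beta> \<noteq> \<alpha>" "y = \<phi> \<beta>" by blast
    have bPhi: "\<beta> \<in> \<Phi>" using b(1) P_sub by blast
    show "y \<in> ?Hw"
    proof (cases "rs_refl \<alpha> \<beta> \<in> P")
      case True
      then show ?thesis using b \<phi>_def by simp
    next
      case False
      then have y: "y = \<beta>" using b(4) \<phi>_def by simp
      have sN: "rs_refl \<alpha> \<beta> \<in> N" using False PorN sinP[OF bPhi] by blast
      have asN: "a (rs_refl \<alpha> \<beta>) \<in> N" using hN[OF b(2)] .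
      have abN: "a \<beta> \<in> N"
      proof -
        have "a \<beta> \<in> P \<or> a \<beta> \<in> N" using PorN ainP[OF bPhi] .
        moreover have "a \<beta> \<notin> P" using K[OF b(1) b(3) sN _ asN] by blast
        ultimately show ?thesis by blast
      qed
      obtain m where m: "m \<ge> 1" "rs_refl \<alpha> \<beta> = \<beta> - of_int m *\<^sub>R \<alpha>"
        using Kpos[OF al(1) b(1) sN] by blast
      let ?x = "- a \<beta>" and ?y = "- a (rs_refl \<alpha> \<beta>)"
      have xP: "?x \<in> P" using abN neg_iff by blast
      have yh: "?y \<in> \<hh>" using b(2) by force
      have yx: "?y - ?x = real (nat m) *\<^sub>R a \<alpha>"
        unfolding m(2) linear_diff[OF alin] linear_scale[OF alin] using m(1) by simp
      have rp: "root_prec \<Phi> \<Delta> ?x ?y"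
        unfolding root_prec_def
        by (rule exI[of _ "replicate (nat m) (a \<alpha>)"])
           (use m(1) aaP yx in \<open>auto simp: sum_list_replicate_scale\<close>)
      have "?x \<in> \<hh>"
      proof (rule ccontr)
        assume "?x \<notin> \<hh>"
        then have "?y \<in> P - \<hh>" using hsU[OF _ _ rp] xP yh hP by blast
        then show False using yh by blast
      qed
      then have "a \<beta> \<in> uminus ` \<hh>" by (metis image_eqI minus_minus)
      then show ?thesis using y b(1) by simp
    qed
  qed
  have inj: "inj_on \<phi> (?Hv - {\<alpha>})"
  proof
    fix x y assume x: "x \<in> ?Hv - {\<alpha>}" and y: "y \<in> ?Hv - {\<alpha>}" and e: "\<phi> x = \<phi> y"
    show "x = y"
    proof (cases "rs_refl \<alpha> x \<in> P"; cases "rs_refl \<alpha> y \<in> P")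
      assume "rs_refl \<alpha> x \<in> P" "rs_refl \<alpha> y \<in> P"
      then have "rs_refl \<alpha> x = rs_refl \<alpha> y" using e \<phi>_def by simp
      then show ?thesis using sinv by metis
    next
      assume "rs_refl \<alpha> x \<notin> P" "rs_refl \<alpha> y \<notin> P"
      then show ?thesis using e \<phi>_def by simp
    next
      assume a1: "rs_refl \<alpha> x \<in> P" "rs_refl \<alpha> y \<notin> P"
      then have "rs_refl \<alpha> x = y" using e \<phi>_def by simp
      then have "rs_refl \<alpha> y = x" using sinv by metis
      then show ?thesis using a1 x by simp
    next
      assume a1: "rs_refl \<alpha> x \<notin> P" "rs_refl \<alpha> y \<in> P"
      then have "x = rs_refl \<alpha> y" using e \<phi>_def by simp
      then have "rs_refl \<alpha> x = y" using sinv by metis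
      then show ?thesis using a1 y by simp
    qed
  qed
  have finHv: "finite ?Hv" using finP by simp
  have "card (?Hv - {\<alpha>}) \<le> card ?Hw"
    by (rule card_inj_on_le[OF inj img]) (simp add: finP)
  moreover have "card ?Hv \<le> card (?Hv - {\<alpha>}) + 1"
    using finHv by (cases "\<alpha> \<in> ?Hv") (simp_all add: card_Diff_singleton_if)
  ultimately show ?thesis unfolding Hv_eq Hw_eq by linarith
  qed
qed

end


theorem corollary2p11:
  fixes \<Phi> \<Delta> \<hh> :: "'a::euclidean_space set" and v w :: "'a \<Rightarrow> 'a"
  assumes "crystallographic_root_system \<Phi>"
    and "is_base \<Phi> \<Delta>"
    and "hessenberg_set \<Phi> \<Delta> \<hh>"
    and "v \<in> weyl_group \<Phi>" and "w \<in> weyl_group \<Phi>"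
    and "is_cover \<Phi> \<Delta> v w"
  shows "int (card (inv_set \<Phi> \<Delta> v)) - int (card (pos_roots \<Phi> \<Delta> - \<hh>))
           \<le> int (card (hess_inv_set \<Phi> \<Delta> \<hh> v))
       \<and> card (hess_inv_set \<Phi> \<Delta> \<hh> v) \<le> card (hess_inv_set \<Phi> \<Delta> \<hh> w) + 1"
proof -
  interpret rs \<Phi> \<Delta> by (rule rs.intro[OF assms(1,2)])
  show ?thesis by (rule main[OF assms(3-6)])
qed

end
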